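(* Let $d=1$, $s=1$, $\Omega=[-L,L]$, $\mathscr{D}=\frac{d}{dx}$, $\lambda_n>0$, $\mu_n\ge0$, and $\gamma_n=\sqrt{\lambda_n/(\lambda_n+\mu_n)}$. Then the reproducing kernel $K$ of $H^1([-L,L])$ equipped with the squared norm $\lambda_n\|f\|^2_{H^1([-L,L])}+\mu_n\|f'\|^2_{L^2([-L,L])}$ is given, for all $x,y\in[-L,L]$, by \[K(x,y)=\frac{\gamma_n}{2\lambda_n\sinh(2\gamma_nL)}\Big((\cosh(2\gamma_nL)+\cosh(2\gamma_nx))\cosh(\gamma_n(x-y))+\big((1-2\cdot\mathbf{1}_{x>y})\sinh(2\gamma_nL)-\sinh(2\gamma_nx)\big)\sinh(\gamma_n(x-y))\Big).\]
   Context: $H^1([-L,L])$ is the usual Sobolev space with $\|f\|^2_{H^1([-L,L])}=\int_{-L}^L(f^2+f'^2)$; its elements are identified with continuous representatives. The reproducing kernel $K$ is the function with $K(x,\cdot)$ in the space for each $x$ and $f(x)=\langle f,K(x,\cdot)\rangle$ for the inner product associated with the given norm. *)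

theory Defs
  imports "HOL-Analysis.Analysis"
begin

text \<open>g is a weak derivative of f on [-L,L] in the H^1 sense: g is measurable and
  square integrable on [-L,L] and f is (the continuous representative) f(x) = f(-L) + int_{-L}^x g.\<close>
definition weak_deriv_H1 :: "real \<Rightarrow> (real \<Rightarrow> real) \<Rightarrow> (real \<Rightarrow> real) \<Rightarrow> bool" where
  "weak_deriv_H1 L f g \<longleftrightarrow>
     set_borel_measurable lborel {-L..L} g \<and>
     set_integrable lborel {-L..L} (\<lambda>t. (g t)^2) \<and>
     (\<forall>x\<in>{-L..L}. f x = f (-L) + (LINT t:{-L..x}|lborel. g t))"

definition H1 :: "real \<Rightarrow> (real \<Rightarrow> real) set" where
  "H1 L = {f. \<exists>g. weak_deriv_H1 L f g}"

text \<open>Inner product associated with the squared norm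
  lam * ||f||^2_{H^1} + mu * ||f'||^2_{L^2}, given functions with their weak derivatives.\<close>
definition H1_inner :: "real \<Rightarrow> real \<Rightarrow> real \<Rightarrow> (real \<Rightarrow> real) \<Rightarrow> (real \<Rightarrow> real)
    \<Rightarrow> (real \<Rightarrow> real) \<Rightarrow> (real \<Rightarrow> real) \<Rightarrow> real" where
  "H1_inner L lam mu f f' h h' =
     lam * (LINT t:{-L..L}|lborel. f t * h t + f' t * h' t)
     + mu * (LINT t:{-L..L}|lborel. f' t * h' t)"

text \<open>K is a reproducing kernel of H^1([-L,L]) with the above inner product:
  K(x,.) lies in the space for each x in [-L,L], and f(x) = <f, K(x,.)> for all f in the space.
  (The inner product does not depend on the choice of weak derivatives, which agree a.e.)\<close>
definition is_reproducing_kernel_H1 :: "real \<Rightarrow> real \<Rightarrow> real \<Rightarrow> (real \<Rightarrow> real \<Rightarrow> real) \<Rightarrow> bool" where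
  "is_reproducing_kernel_H1 L lam mu K \<longleftrightarrow>
     (\<forall>x\<in>{-L..L}. \<exists>k. weak_deriv_H1 L (K x) k \<and>
        (\<forall>f f'. weak_deriv_H1 L f f' \<longrightarrow> f x = H1_inner L lam mu f f' (K x) k))"

end

theory Submission
  imports Defs
begin

lemma ibp_core:
  fixes g \<phi> \<phi>' :: "real \<Rightarrow> real"
  assumes ab: "a \<le> b" and g: "set_integrable lborel {a..b} g"
    and d\<phi>: "\<And>t. (\<phi> has_real_derivative \<phi>' t) (at t)" and c\<phi>': "continuous_on UNIV \<phi>'"
  shows "set_integrable lborel {a..b} (\<lambda>s. \<phi>' s * (LINT t:{a..s}|lborel. g t))"
    and "(LINT t:{a..b}|lborel. g t * (\<phi> b - \<phi> t)) = (LINT s:{a..b}|lborel. \<phi>' s * (LINT t:{a..s}|lborel. g t))"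
    and "set_integrable lborel {a..b} (\<lambda>t. g t * (\<phi> b - \<phi> t))"
proof -
  define G where "G t = indicator {a..b} t * g t" for t
  have Gi: "integrable lborel G" using g unfolding set_integrable_def G_def by simp
  have Gm[measurable]: "G \<in> borel_measurable lborel" using Gi by (rule borel_measurable_integrable)
  have pm[measurable]: "\<phi>' \<in> borel_measurable borel" using c\<phi>' by (rule borel_measurable_continuous_onI)
  have "bounded (\<phi>' ` {a..b})"
    by (rule compact_imp_bounded[OF compact_continuous_image]) (use c\<phi>' continuous_on_subset in auto)
  then obtain B where B0: "\<forall>s\<in>{a..b}. \<bar>\<phi>' s\<bar> \<le> B" unfolding bounded_iff by auto
  have B: "\<And>s. s \<in> {a..b} \<Longrightarrow> \<bar>\<phi>' s\<bar> \<le> B" using B0 by blast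
  have Bnn: "0 \<le> B" using B[of a] ab by auto
  define H where "H s t = (if a \<le> t \<and> t \<le> s \<and> s \<le> b then \<phi>' s * G t else 0)" for s t
  have Hm[measurable]: "(\<lambda>(s,t). H s t) \<in> borel_measurable (lborel \<Otimes>\<^sub>M lborel)"
    unfolding H_def by measurable
  have Hb: "\<bar>H s t\<bar> \<le> indicator {a..b} s * B * \<bar>G t\<bar>" for s t
  proof (cases "a \<le> t \<and> t \<le> s \<and> s \<le> b")
    case True
    then show ?thesis using B[of s] by (auto simp: H_def abs_mult intro: mult_right_mono)
  next
    case False
    then show ?thesis using Bnn by (auto simp: H_def)
  qed
  have Hi: "integrable lborel (H s)" for s
    by (rule Bochner_Integration.integrable_bound[where f="\<lambda>t. indicator {a..b} s * B * G t" and g="H s"]) (use Gi Hb Bnn in \<open>auto simp: abs_mult\<close>)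
  have Hint: "integrable (lborel \<Otimes>\<^sub>M lborel) (\<lambda>(s,t). H s t)"
  proof (rule lborel_pair.Fubini_integrable[OF Hm])
    show "AE x in lborel. integrable lborel (\<lambda>y. case (x, y) of (s, t) \<Rightarrow> H s t)" using Hi by simp
    show "integrable lborel (\<lambda>x. LINT y|lborel. norm (case (x, y) of (s, t) \<Rightarrow> H s t))"
    proof (rule Bochner_Integration.integrable_bound[where f="\<lambda>s. indicator {a..b} s * (B * (LINT t|lborel. \<bar>G t\<bar>))"])
      show "integrable lborel (\<lambda>s. indicator {a..b} s * (B * (LINT t|lborel. \<bar>G t\<bar>)))"
        by (intro integrable_mult_left) (use borel_integrable_atLeastAtMost'[of a b "\<lambda>_. 1::real"] in \<open>simp add: set_integrable_def\<close>)
      show "(\<lambda>x. LINT y|lborel. norm (case (x, y) of (s, t) \<Rightarrow> H s t)) \<in> borel_measurable lborel"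
        by (rule lborel.borel_measurable_lebesgue_integral) (simp, measurable)
      show "AE x in lborel. norm (LINT y|lborel. norm (case (x, y) of (s, t) \<Rightarrow> H s t))
          \<le> norm (indicator {a..b} x * (B * (LINT t|lborel. \<bar>G t\<bar>)))"
      proof (intro AE_I2)
        fix s
        have "(LINT t|lborel. \<bar>H s t\<bar>) \<le> (LINT t|lborel. indicator {a..b} s * B * \<bar>G t\<bar>)"
          by (rule integral_mono) (use Gi Hi Hb in auto)
        also have "\<dots> = indicator {a..b} s * (B * (LINT t|lborel. \<bar>G t\<bar>))" by simp
        finally show "norm (LINT y|lborel. norm (case (s, y) of (s, t) \<Rightarrow> H s t))
          \<le> norm (indicator {a..b} s * (B * (LINT t|lborel. \<bar>G t\<bar>)))"
          by (simp add: integral_nonneg_AE)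
      qed
    qed
  qed
  have inner_t: "(LINT t|lborel. H s t) = indicator {a..b} s *\<^sub>R (\<phi>' s * (LINT t:{a..s}|lborel. g t))" for s
  proof (cases "s \<in> {a..b}")
    case True
    have "(LINT t|lborel. H s t) = (LINT t|lborel. \<phi>' s * (indicator {a..s} t *\<^sub>R g t))"
      by (rule Bochner_Integration.integral_cong) (use True in \<open>auto simp: H_def G_def indicator_def\<close>)
    also have "\<dots> = \<phi>' s * (LINT t:{a..s}|lborel. g t)"
      by (simp add: set_lebesgue_integral_def)
    finally show ?thesis using True by simp
  next
    case False
    then have "H s = (\<lambda>t. 0)" by (auto simp: H_def fun_eq_iff)
    then show ?thesis using False by simp
  qed
  have inner_s: "(LINT s|lborel. H s t) = indicator {a..b} t *\<^sub>R (g t * (\<phi> b - \<phi> t))" for t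
  proof (cases "t \<in> {a..b}")
    case True
    have "(LINT s|lborel. H s t) = (LINT s|lborel. G t * (indicator {t..b} s *\<^sub>R \<phi>' s))"
      by (rule Bochner_Integration.integral_cong) (use True in \<open>auto simp: H_def G_def indicator_def\<close>)
    also have "\<dots> = G t * (LINT s:{t..b}|lborel. \<phi>' s)"
      by (simp add: set_lebesgue_integral_def)
    also have "(LINT s:{t..b}|lborel. \<phi>' s) = \<phi> b - \<phi> t"
    proof -
      have "(LBINT s=t..b. \<phi>' s) = \<phi> b - \<phi> t"
      proof (rule interval_integral_FTC_finite)
        show "continuous_on {min t b..max t b} \<phi>'" using continuous_on_subset[OF c\<phi>'] by blast
        fix x show "(\<phi> has_vector_derivative \<phi>' x) (at x within {min t b..max t b})"
          using d\<phi>[of x] by (simp add: has_real_derivative_iff_has_vector_derivative[symmetric] has_field_derivative_at_within)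
      qed
      then show ?thesis using True by (simp add: interval_integral_Icc)
    qed
    finally show ?thesis using True by (simp add: G_def)
  next
    case False
    then have "(\<lambda>s. H s t) = (\<lambda>s. 0)" by (auto simp: H_def fun_eq_iff)
    then show ?thesis using False by simp
  qed
  have "integrable lborel (\<lambda>s. LINT t|lborel. H s t)"
    using lborel_pair.integrable_fst[of H] Hint by simp
  then show "set_integrable lborel {a..b} (\<lambda>s. \<phi>' s * (LINT t:{a..s}|lborel. g t))"
    unfolding set_integrable_def inner_t .
  have "integrable lborel (\<lambda>t. LINT s|lborel. H s t)"
    using lborel_pair.integrable_snd[of H] Hint by simp
  then show "set_integrable lborel {a..b} (\<lambda>t. g t * (\<phi> b - \<phi> t))"
    unfolding set_integrable_def inner_s .
  have "(LINT t|lborel. LINT s|lborel. H s t) = (LINT s|lborel. LINT t|lborel. H s t)"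
    by (rule lborel_pair.Fubini_integral) (use Hint in simp)
  then show "(LINT t:{a..b}|lborel. g t * (\<phi> b - \<phi> t)) = (LINT s:{a..b}|lborel. \<phi>' s * (LINT t:{a..s}|lborel. g t))"
    unfolding inner_t inner_s set_lebesgue_integral_def .
qed

lemma ibp:
  fixes g F \<phi> \<phi>' :: "real \<Rightarrow> real"
  assumes ab: "a \<le> b" and g: "set_integrable lborel {a..b} g"
    and d\<phi>: "\<And>t. (\<phi> has_real_derivative \<phi>' t) (at t)" and c\<phi>': "continuous_on UNIV \<phi>'"
    and F: "\<And>s. s \<in> {a..b} \<Longrightarrow> F s = F a + (LINT t:{a..s}|lborel. g t)"
  shows "set_integrable lborel {a..b} (\<lambda>s. \<phi>' s * F s)"
    and "(LINT t:{a..b}|lborel. g t * \<phi> t) = F b * \<phi> b - F a * \<phi> a - (LINT s:{a..b}|lborel. \<phi>' s * F s)"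
proof -
  note core = ibp_core[OF ab g d\<phi> c\<phi>']
  have pi: "set_integrable lborel {a..b} \<phi>'"
    by (rule borel_integrable_atLeastAtMost') (use continuous_on_subset[OF c\<phi>'] in blast)
  have pint: "(LINT s:{a..b}|lborel. \<phi>' s) = \<phi> b - \<phi> a"
  proof -
    have "(LBINT s=a..b. \<phi>' s) = \<phi> b - \<phi> a"
    proof (rule interval_integral_FTC_finite)
      show "continuous_on {min a b..max a b} \<phi>'" using continuous_on_subset[OF c\<phi>'] by blast
      fix x show "(\<phi> has_vector_derivative \<phi>' x) (at x within {min a b..max a b})"
        using d\<phi>[of x] by (simp add: has_real_derivative_iff_has_vector_derivative[symmetric] has_field_derivative_at_within)
    qed
    then show ?thesis using ab by (simp add: interval_integral_Icc)
  qed
  have eq1: "\<forall>s. s \<in> {a..b} \<longrightarrow> \<phi>' s * F s = \<phi>' s * (LINT t:{a..s}|lborel. g t) + F a * \<phi>' s"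
  proof (intro allI impI)
    fix s assume "s \<in> {a..b}"
    then have "F s = F a + (LINT t:{a..s}|lborel. g t)" by (rule F)
    then show "\<phi>' s * F s = \<phi>' s * (LINT t:{a..s}|lborel. g t) + F a * \<phi>' s" by (simp add: algebra_simps)
  qed
  have i1: "set_integrable lborel {a..b} (\<lambda>s. \<phi>' s * (LINT t:{a..s}|lborel. g t) + F a * \<phi>' s)"
    using set_integral_add(1)[OF core(1) set_integrable_mult_right[OF pi, of "F a"]] by simp
  show "set_integrable lborel {a..b} (\<lambda>s. \<phi>' s * F s)"
  proof -
    have "set_integrable lborel {a..b} (\<lambda>s. \<phi>' s * F s) = set_integrable lborel {a..b} (\<lambda>s. \<phi>' s * (LINT t:{a..s}|lborel. g t) + F a * \<phi>' s)"
      by (rule set_integrable_cong) (use eq1 in auto)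
    with i1 show ?thesis by simp
  qed
  have "(LINT s:{a..b}|lborel. \<phi>' s * F s) = (LINT s:{a..b}|lborel. \<phi>' s * (LINT t:{a..s}|lborel. g t) + F a * \<phi>' s)"
    by (rule set_lebesgue_integral_cong) (use eq1 in auto)
  also have "\<dots> = (LINT s:{a..b}|lborel. \<phi>' s * (LINT t:{a..s}|lborel. g t)) + F a * (\<phi> b - \<phi> a)"
    using set_integral_add(2)[OF core(1) set_integrable_mult_right[OF pi, of "F a"]] pint by simp
  finally have e2: "(LINT s:{a..b}|lborel. \<phi>' s * F s) = (LINT t:{a..b}|lborel. g t * (\<phi> b - \<phi> t)) + F a * (\<phi> b - \<phi> a)"
    using core(2) by simp
  have "F b = F a + (LINT t:{a..b}|lborel. g t)" by (rule F) (use ab in auto)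
  then have gb: "(LINT t:{a..b}|lborel. g t) = F b - F a" by simp
  have eq3: "\<forall>t. t \<in> {a..b} \<longrightarrow> g t * \<phi> t = g t * \<phi> b - g t * (\<phi> b - \<phi> t)"
    by (auto simp: algebra_simps)
  have "(LINT t:{a..b}|lborel. g t * \<phi> t) = (LINT t:{a..b}|lborel. g t * \<phi> b - g t * (\<phi> b - \<phi> t))"
    by (rule set_lebesgue_integral_cong) (use eq3 in auto)
  also have "\<dots> = (LINT t:{a..b}|lborel. g t) * \<phi> b - (LINT t:{a..b}|lborel. g t * (\<phi> b - \<phi> t))"
    using set_integral_diff(2)[OF set_integrable_mult_left[OF g, of "\<phi> b"] core(3)] by simp
  finally show "(LINT t:{a..b}|lborel. g t * \<phi> t) = F b * \<phi> b - F a * \<phi> a - (LINT s:{a..b}|lborel. \<phi>' s * F s)"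
    using e2 gb by (simp add: algebra_simps)
qed

lemma abs_le_1_sq: "\<bar>x::real\<bar> \<le> 1 + x^2"
proof (cases "\<bar>x\<bar> \<le> 1")
  case True
  have "0 \<le> x^2" by simp
  with True show ?thesis by linarith
next
  case False
  then have "\<bar>x\<bar> * 1 \<le> \<bar>x\<bar> * \<bar>x\<bar>" by (intro mult_left_mono) auto
  then show ?thesis by (simp add: power2_eq_square abs_mult_self_eq)
qed

lemma set_integrable_Icc_const: "set_integrable lborel {a::real..b} (\<lambda>_. c::real)"
  by (rule borel_integrable_atLeastAtMost') simp

lemma sq_int:
  fixes g :: "real \<Rightarrow> real"
  assumes "set_borel_measurable lborel {a..b} g" "set_integrable lborel {a..b} (\<lambda>t. (g t)^2)"
  shows "set_integrable lborel {a..b} g"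
proof (rule set_integrable_bound[where f="\<lambda>t. 1 + (g t)^2"])
  show "set_integrable lborel {a..b} (\<lambda>t. 1 + (g t)^2)"
    using set_integral_add(1)[OF set_integrable_Icc_const[of a b 1] assms(2)] by simp
  show "AE x in lborel. x \<in> {a..b} \<longrightarrow> norm (g x) \<le> norm (1 + (g x)^2)"
  proof (intro AE_I2 impI)
    fix x
    have "0 \<le> 1 + (g x)^2" by (simp add: add_nonneg_nonneg)
    then show "norm (g x) \<le> norm (1 + (g x)^2)" using abs_le_1_sq[of "g x"] by simp
  qed
qed (use assms in auto)

lemma wd_int:
  assumes "weak_deriv_H1 L f f'"
  shows "set_integrable lborel {-L..L} f'"
  using assms sq_int unfolding weak_deriv_H1_def by blast

lemma wd_cont:
  assumes wd: "weak_deriv_H1 L f f'"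
  shows "continuous_on {-L..L} f"
proof -
  have fi: "set_integrable lborel {-L..L} f'" using wd_int[OF wd] .
  have eq: "f x = f (-L) + integral {-L..x} f'" if "x \<in> {-L..L}" for x
  proof -
    have "set_integrable lborel {-L..x} f'"
      by (rule set_integrable_subset[OF fi]) (use that in auto)
    then have "(LINT t:{-L..x}|lborel. f' t) = integral {-L..x} f'"
      by (rule set_borel_integral_eq_integral(2))
    moreover have "f x = f (-L) + (LINT t:{-L..x}|lborel. f' t)" using wd that unfolding weak_deriv_H1_def by blast
    ultimately show ?thesis by simp
  qed
  have "continuous_on {-L..L} (\<lambda>x. integral {-L..x} f')"
    by (rule indefinite_integral_continuous_1[OF set_borel_integral_eq_integral(1)[OF fi]])
  then have "continuous_on {-L..L} (\<lambda>x. f (-L) + integral {-L..x} f')"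
    by (rule continuous_on_add[OF continuous_on_const])
  then show ?thesis by (rule continuous_on_eq) (use eq in metis)
qed

lemma set_bm_cont:
  fixes h :: "real \<Rightarrow> real"
  assumes "continuous_on {a..b} h"
  shows "set_borel_measurable lborel {a..b} h"
  unfolding set_borel_measurable_def
  using borel_measurable_continuous_on_indicator[OF _ assms] by simp

lemma set_bm_mult:
  fixes g h :: "real \<Rightarrow> real"
  assumes "set_borel_measurable M A g" "set_borel_measurable M A h"
  shows "set_borel_measurable M A (\<lambda>t. g t * h t)"
proof -
  have "(\<lambda>t. indicator A t *\<^sub>R (g t * h t)) = (\<lambda>t. (indicator A t *\<^sub>R g t) * (indicator A t *\<^sub>R h t))"
    by (auto simp: fun_eq_iff indicator_def)
  then show ?thesis using assms unfolding set_borel_measurable_def by simp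
qed

lemma set_bm_diff:
  fixes g h :: "real \<Rightarrow> real"
  assumes "set_borel_measurable M A g" "set_borel_measurable M A h"
  shows "set_borel_measurable M A (\<lambda>t. g t - h t)"
proof -
  have "(\<lambda>t. indicator A t *\<^sub>R (g t - h t)) = (\<lambda>t. (indicator A t *\<^sub>R g t) - (indicator A t *\<^sub>R h t))"
    by (auto simp: fun_eq_iff indicator_def)
  then show ?thesis using assms unfolding set_borel_measurable_def by simp
qed

lemma int_mult_cont:
  fixes g h :: "real \<Rightarrow> real"
  assumes g: "set_integrable lborel {a..b} g" and h: "continuous_on {a..b} h"
  shows "set_integrable lborel {a..b} (\<lambda>t. g t * h t)"
proof (cases "a \<le> b")
  case False
  then show ?thesis unfolding set_integrable_def by simp
next
  case True
  have "bounded (h ` {a..b})"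
    by (rule compact_imp_bounded[OF compact_continuous_image[OF h]]) simp
  then obtain B where B0: "\<forall>s\<in>{a..b}. \<bar>h s\<bar> \<le> B" unfolding bounded_iff by auto
  have Bnn: "0 \<le> B" using B0 True by force
  show ?thesis
  proof (rule set_integrable_bound[where f="\<lambda>t. B * g t"])
    show "set_integrable lborel {a..b} (\<lambda>t. B * g t)" using g by simp
    have "set_borel_measurable lborel {a..b} g"
      using g unfolding set_integrable_def set_borel_measurable_def by (rule borel_measurable_integrable)
    then show "set_borel_measurable lborel {a..b} (\<lambda>t. g t * h t)"
      by (rule set_bm_mult[OF _ set_bm_cont[OF h]])
    show "AE x in lborel. x \<in> {a..b} \<longrightarrow> norm (g x * h x) \<le> norm (B * g x)"
    proof (intro AE_I2 impI)
      fix x assume "x \<in> {a..b}"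
      then have "\<bar>h x\<bar> \<le> B" using B0 by blast
      then have "\<bar>g x\<bar> * \<bar>h x\<bar> \<le> \<bar>g x\<bar> * B" by (rule mult_left_mono) simp
      then show "norm (g x * h x) \<le> norm (B * g x)" using Bnn by (simp add: abs_mult mult.commute)
    qed
  qed
qed

lemma L2prod:
  fixes u v :: "real \<Rightarrow> real"
  assumes "set_borel_measurable lborel A u" "set_borel_measurable lborel A v"
    "set_integrable lborel A (\<lambda>t. (u t)^2)" "set_integrable lborel A (\<lambda>t. (v t)^2)"
  shows "set_integrable lborel A (\<lambda>t. u t * v t)"
proof (rule set_integrable_bound[where f="\<lambda>t. (u t)^2 + (v t)^2"])
  show "set_integrable lborel A (\<lambda>t. (u t)^2 + (v t)^2)" using assms(3,4) by simp
  show "set_borel_measurable lborel A (\<lambda>t. u t * v t)" by (rule set_bm_mult[OF assms(1,2)])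
  have ab: "\<bar>a * b\<bar> \<le> a^2 + b^2" for a b :: real
  proof -
    have h: "0 \<le> (\<bar>a\<bar> - \<bar>b\<bar>)^2" by simp
    have "(\<bar>a\<bar> - \<bar>b\<bar>)^2 = a^2 + b^2 - 2 * \<bar>a\<bar> * \<bar>b\<bar>" by (simp add: power2_diff)
    moreover have "0 \<le> \<bar>a\<bar> * \<bar>b\<bar>" by simp
    ultimately show ?thesis using h unfolding abs_mult by linarith
  qed
  show "AE x in lborel. x \<in> A \<longrightarrow> norm (u x * v x) \<le> norm ((u x)^2 + (v x)^2)"
  proof (intro AE_I2 impI)
    fix t
    have "0 \<le> (u t)^2 + (v t)^2" by simp
    then show "norm (u t * v t) \<le> norm ((u t)^2 + (v t)^2)" using ab[of "u t" "v t"] by simp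
  qed
qed

lemma ftc_Icc:
  fixes F f :: "real \<Rightarrow> real"
  assumes "a \<le> b" "\<And>t. (F has_real_derivative f t) (at t)" "continuous_on UNIV f"
  shows "(LINT t:{a..b}|lborel. f t) = F b - F a"
proof -
  have "(LBINT s=a..b. f s) = F b - F a"
  proof (rule interval_integral_FTC_finite)
    show "continuous_on {min a b..max a b} f" using continuous_on_subset[OF assms(3)] by blast
    fix x show "(F has_vector_derivative f x) (at x within {min a b..max a b})"
      using assms(2)[of x] by (simp add: has_real_derivative_iff_has_vector_derivative[symmetric] has_field_derivative_at_within)
  qed
  then show ?thesis using assms(1) by (simp add: interval_integral_Icc)
qed

lemma Icc_Ico:
  fixes f :: "real \<Rightarrow> real"
  assumes "a \<le> b"
  shows "(LINT t:{a..b}|lborel. f t) = (LINT t:{a..<b}|lborel. f t)"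
  using interval_integral_Icc[OF assms, of f] interval_integral_Ico[OF assms, of f] by simp

lemma split_Ico_Icc:
  fixes f :: "real \<Rightarrow> real"
  assumes "a \<le> x" "x \<le> y" "set_integrable lborel {a..y} f"
  shows "(LINT t:{a..y}|lborel. f t) = (LINT t:{a..<x}|lborel. f t) + (LINT t:{x..y}|lborel. f t)"
    and "set_integrable lborel {a..<x} f" "set_integrable lborel {x..y} f"
proof -
  show i1: "set_integrable lborel {a..<x} f" by (rule set_integrable_subset[OF assms(3)]) (use assms in auto)
  show i2: "set_integrable lborel {x..y} f" by (rule set_integrable_subset[OF assms(3)]) (use assms in auto)
  have "{a..y} = {a..<x} \<union> {x..y}" using assms by auto
  then show "(LINT t:{a..y}|lborel. f t) = (LINT t:{a..<x}|lborel. f t) + (LINT t:{x..y}|lborel. f t)"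
  proof -
    have d: "{a..<x} \<inter> {x..y} = {}" by auto
    show ?thesis using set_integral_Un[OF d i1 i2] \<open>{a..y} = {a..<x} \<union> {x..y}\<close> by simp
  qed
qed

lemma split_int:
  fixes f :: "real \<Rightarrow> real"
  assumes "a \<le> x" "x \<le> y" "set_integrable lborel {a..<x} f" "set_integrable lborel {x..y} f"
  shows "set_integrable lborel {a..y} f"
proof -
  have "{a..y} = {a..<x} \<union> {x..y}" using assms by auto
  then show ?thesis using set_integrable_Un[OF assms(3,4)] by auto
qed

lemma repro_exists:
  fixes L lam mu \<gamma> x :: real and Kx :: "real \<Rightarrow> real"
  assumes L: "L > 0" and lam: "lam > 0" and mu: "mu \<ge> 0" and g0: "\<gamma> > 0"
    and gg: "(lam + mu) * \<gamma>^2 = lam" and x: "x \<in> {-L..L}"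
  defines "c \<equiv> \<gamma> / (2 * lam * sinh (2 * \<gamma> * L))"
  defines "A \<equiv> \<lambda>y. c * (cosh (\<gamma> * (x - y - 2 * L)) + cosh (\<gamma> * (x + y)))"
  defines "A' \<equiv> \<lambda>y. c * \<gamma> * (sinh (\<gamma> * (x + y)) - sinh (\<gamma> * (x - y - 2 * L)))"
  defines "Bf \<equiv> \<lambda>y. c * (cosh (\<gamma> * (x - y + 2 * L)) + cosh (\<gamma> * (x + y)))"
  defines "B' \<equiv> \<lambda>y. c * \<gamma> * (sinh (\<gamma> * (x + y)) - sinh (\<gamma> * (x - y + 2 * L)))"
  defines "k \<equiv> \<lambda>y. if y < x then A' y else B' y"
  assumes KA: "\<And>y. y \<le> x \<Longrightarrow> Kx y = A y" and KB: "\<And>y. x \<le> y \<Longrightarrow> Kx y = Bf y"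
  shows "weak_deriv_H1 L Kx k \<and> (\<forall>f f'. weak_deriv_H1 L f f' \<longrightarrow> f x = H1_inner L lam mu f f' Kx k)"
proof -
  have xl: "-L \<le> x" "x \<le> L" using x by auto
  have S: "sinh (2 * \<gamma> * L) > 0" using g0 L by simp
  have dA: "(A has_real_derivative A' y) (at y)" for y
    unfolding A_def A'_def by (auto intro!: derivative_eq_intros simp: algebra_simps)
  have dB: "(Bf has_real_derivative B' y) (at y)" for y
    unfolding Bf_def B'_def by (auto intro!: derivative_eq_intros simp: algebra_simps)
  have dA': "(A' has_real_derivative \<gamma>^2 * A y) (at y)" for y
    unfolding A_def A'_def by (auto intro!: derivative_eq_intros simp: algebra_simps power2_eq_square)
  have dB': "(B' has_real_derivative \<gamma>^2 * Bf y) (at y)" for y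
    unfolding Bf_def B'_def by (auto intro!: derivative_eq_intros simp: algebra_simps power2_eq_square)
  have cA: "continuous_on UNIV A" unfolding A_def by (intro continuous_intros)
  have cB: "continuous_on UNIV Bf" unfolding Bf_def by (intro continuous_intros)
  have cA': "continuous_on UNIV A'" unfolding A'_def by (intro continuous_intros)
  have cB': "continuous_on UNIV B'" unfolding B'_def by (intro continuous_intros)
  have cA2: "continuous_on UNIV (\<lambda>t. \<gamma>^2 * A t)" using cA by (intro continuous_intros)
  have cB2: "continuous_on UNIV (\<lambda>t. \<gamma>^2 * Bf t)" using cB by (intro continuous_intros)
  have A'L: "A' (-L) = 0" unfolding A'_def by (simp add: algebra_simps)
  have B'L: "B' L = 0" unfolding B'_def by (simp add: algebra_simps)
  have ABx: "A x = Bf x" unfolding A_def Bf_def by simp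
  have jump: "A' x - B' x = \<gamma>^2 / lam"
  proof -
    have "A' x - B' x = 2 * c * \<gamma> * sinh (2 * \<gamma> * L)"
      unfolding A'_def B'_def by (simp add: algebra_simps)
    also have "\<dots> = \<gamma>^2 / lam" unfolding c_def using S lam L g0 by (simp add: field_simps power2_eq_square)
    finally show ?thesis .
  qed
  have mA'[measurable]: "A' \<in> borel_measurable borel" by (rule borel_measurable_continuous_onI[OF cA'])
  have mB'[measurable]: "B' \<in> borel_measurable borel" by (rule borel_measurable_continuous_onI[OF cB'])
  have mk[measurable]: "k \<in> borel_measurable borel" unfolding k_def by measurable
  have km: "set_borel_measurable lborel {-L..L} k" unfolding set_borel_measurable_def by measurable
  have k2: "set_integrable lborel {-L..L} (\<lambda>t. (k t)^2)"
  proof (rule set_integrable_bound[where f="\<lambda>t. (A' t)^2 + (B' t)^2"])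
    show "set_integrable lborel {-L..L} (\<lambda>t. (A' t)^2 + (B' t)^2)"
      by (rule borel_integrable_atLeastAtMost', rule continuous_on_subset[OF _ subset_UNIV]) (intro continuous_intros cA' cB')
    show "set_borel_measurable lborel {-L..L} (\<lambda>t. (k t)^2)"
      using set_bm_mult[OF km km] by (simp add: power2_eq_square)
    show "AE x in lborel. x \<in> {-L..L} \<longrightarrow> norm ((k x)^2) \<le> norm ((A' x)^2 + (B' x)^2)"
      by (auto intro!: AE_I2 simp: k_def)
  qed
  have kint: "set_integrable lborel {-L..L} k" by (rule sq_int[OF km k2])
  have wdk: "weak_deriv_H1 L Kx k"
    unfolding weak_deriv_H1_def
  proof (intro conjI km k2 ballI)
    fix y assume y: "y \<in> {-L..L}"
    have K0: "Kx (-L) = A (-L)" using KA xl by simp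
    show "Kx y = Kx (-L) + (LINT t:{-L..y}|lborel. k t)"
    proof (cases "y \<le> x")
      case True
      have "(LINT t:{-L..y}|lborel. k t) = (LINT t:{-L..<y}|lborel. k t)" using y by (simp add: Icc_Ico)
      also have "\<dots> = (LINT t:{-L..<y}|lborel. A' t)"
        by (rule set_lebesgue_integral_cong) (use True in \<open>auto simp: k_def\<close>)
      also have "\<dots> = (LINT t:{-L..y}|lborel. A' t)" using y by (simp add: Icc_Ico)
      also have "\<dots> = A y - A (-L)" by (rule ftc_Icc[OF _ dA cA']) (use y in auto)
      finally show ?thesis using KA[OF True] K0 by simp
    next
      case False
      have sp: "(LINT t:{-L..y}|lborel. k t) = (LINT t:{-L..<x}|lborel. k t) + (LINT t:{x..y}|lborel. k t)"
        by (rule split_Ico_Icc(1)) (use xl False y in \<open>auto intro: set_integrable_subset[OF kint]\<close>)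
      have "(LINT t:{-L..<x}|lborel. k t) = (LINT t:{-L..<x}|lborel. A' t)"
        by (rule set_lebesgue_integral_cong) (auto simp: k_def)
      also have "\<dots> = (LINT t:{-L..x}|lborel. A' t)" using xl by (simp add: Icc_Ico)
      also have "\<dots> = A x - A (-L)" by (rule ftc_Icc[OF _ dA cA']) (use xl in auto)
      finally have p1: "(LINT t:{-L..<x}|lborel. k t) = A x - A (-L)" .
      have "(LINT t:{x..y}|lborel. k t) = (LINT t:{x..y}|lborel. B' t)"
        by (rule set_lebesgue_integral_cong) (auto simp: k_def)
      also have "\<dots> = Bf y - Bf x" by (rule ftc_Icc[OF _ dB cB']) (use False in auto)
      finally have p2: "(LINT t:{x..y}|lborel. k t) = Bf y - Bf x" .
      show ?thesis using sp p1 p2 K0 KB[of y] False ABx by simp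
    qed
  qed
  have repr: "f x = H1_inner L lam mu f f' Kx k" if wd: "weak_deriv_H1 L f f'" for f f'
  proof -
    have fc: "continuous_on {-L..L} f" by (rule wd_cont[OF wd])
    have fi: "set_integrable lborel {-L..L} f'" by (rule wd_int[OF wd])
    have fform: "\<And>s. s \<in> {-L..L} \<Longrightarrow> f s = f (-L) + (LINT t:{-L..s}|lborel. f' t)"
      using wd unfolding weak_deriv_H1_def by blast
    have fi1: "set_integrable lborel {-L..x} f'" by (rule set_integrable_subset[OF fi]) (use xl in auto)
    have fi2: "set_integrable lborel {x..L} f'" by (rule set_integrable_subset[OF fi]) (use xl in auto)
    have fc1: "continuous_on {-L..x} f" by (rule continuous_on_subset[OF fc]) (use xl in auto)
    have fc2: "continuous_on {x..L} f" by (rule continuous_on_subset[OF fc]) (use xl in auto)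
    note I1 = ibp[OF xl(1) fi1 dA' cA2, of f]
    have I1eq: "(LINT t:{-L..x}|lborel. f' t * A' t) = f x * A' x - f (-L) * A' (-L) - (LINT s:{-L..x}|lborel. \<gamma>^2 * A s * f s)"
      by (rule I1(2), rule fform) (use xl in auto)
    have F2: "f s = f x + (LINT t:{x..s}|lborel. f' t)" if s: "s \<in> {x..L}" for s
    proof -
      have "f s = f (-L) + (LINT t:{-L..s}|lborel. f' t)" by (rule fform) (use s xl in auto)
      also have "(LINT t:{-L..s}|lborel. f' t) = (LINT t:{-L..<x}|lborel. f' t) + (LINT t:{x..s}|lborel. f' t)"
        by (rule split_Ico_Icc(1)) (use xl s in \<open>auto intro: set_integrable_subset[OF fi]\<close>)
      also have "(LINT t:{-L..<x}|lborel. f' t) = (LINT t:{-L..x}|lborel. f' t)" using xl by (simp add: Icc_Ico)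
      finally have "f s = f (-L) + ((LINT t:{-L..x}|lborel. f' t) + (LINT t:{x..s}|lborel. f' t))" .
      moreover have "f x = f (-L) + (LINT t:{-L..x}|lborel. f' t)" by (rule fform) (use xl in auto)
      ultimately show ?thesis by linarith
    qed
    note I2 = ibp[OF xl(2) fi2 dB' cB2, of f]
    have I2eq: "(LINT t:{x..L}|lborel. f' t * B' t) = f L * B' L - f x * B' x - (LINT s:{x..L}|lborel. \<gamma>^2 * Bf s * f s)"
      by (rule I2(2), erule F2)
    define P where "P t = f t * Kx t" for t
    define Q where "Q t = f' t * k t" for t
    have PA: "set_integrable lborel {-L..x} (\<lambda>t. f t * A t)"
      by (rule borel_integrable_atLeastAtMost'[OF continuous_on_mult[OF fc1 continuous_on_subset[OF cA subset_UNIV]]])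
    have PB: "set_integrable lborel {x..L} (\<lambda>t. f t * Bf t)"
      by (rule borel_integrable_atLeastAtMost'[OF continuous_on_mult[OF fc2 continuous_on_subset[OF cB subset_UNIV]]])
    have QA: "set_integrable lborel {-L..x} (\<lambda>t. f' t * A' t)"
      by (rule int_mult_cont[OF fi1 continuous_on_subset[OF cA' subset_UNIV]])
    have QB: "set_integrable lborel {x..L} (\<lambda>t. f' t * B' t)"
      by (rule int_mult_cont[OF fi2 continuous_on_subset[OF cB' subset_UNIV]])
    have P1: "set_integrable lborel {-L..<x} P"
    proof -
      have "set_integrable lborel {-L..<x} (\<lambda>t. f t * A t)" by (rule set_integrable_subset[OF PA]) auto
      then show ?thesis by (subst set_integrable_cong[OF refl refl]) (auto simp: P_def KA)
    qed
    have P2: "set_integrable lborel {x..L} P"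
      using PB by (subst set_integrable_cong[OF refl refl]) (auto simp: P_def KB)
    have Q1: "set_integrable lborel {-L..<x} Q"
    proof -
      have "set_integrable lborel {-L..<x} (\<lambda>t. f' t * A' t)" by (rule set_integrable_subset[OF QA]) auto
      then show ?thesis by (subst set_integrable_cong[OF refl refl]) (auto simp: Q_def k_def)
    qed
    have Q2: "set_integrable lborel {x..L} Q"
      using QB by (subst set_integrable_cong[OF refl refl]) (auto simp: Q_def k_def)
    have Pi: "set_integrable lborel {-L..L} P" by (rule split_int[OF xl P1 P2])
    have Qi: "set_integrable lborel {-L..L} Q" by (rule split_int[OF xl Q1 Q2])
    have IP: "(LINT t:{-L..L}|lborel. P t) = (LINT t:{-L..x}|lborel. f t * A t) + (LINT t:{x..L}|lborel. f t * Bf t)"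
    proof -
      have "(LINT t:{-L..L}|lborel. P t) = (LINT t:{-L..<x}|lborel. P t) + (LINT t:{x..L}|lborel. P t)"
        by (rule split_Ico_Icc(1)[OF xl Pi])
      also have "(LINT t:{-L..<x}|lborel. P t) = (LINT t:{-L..x}|lborel. P t)" using xl by (simp add: Icc_Ico)
      also have "\<dots> = (LINT t:{-L..x}|lborel. f t * A t)"
        by (rule set_lebesgue_integral_cong) (auto simp: P_def KA)
      also have "(LINT t:{x..L}|lborel. P t) = (LINT t:{x..L}|lborel. f t * Bf t)"
        by (rule set_lebesgue_integral_cong) (auto simp: P_def KB)
      finally show ?thesis .
    qed
    have IQ: "(LINT t:{-L..L}|lborel. Q t) = (LINT t:{-L..x}|lborel. f' t * A' t) + (LINT t:{x..L}|lborel. f' t * B' t)"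
    proof -
      have "(LINT t:{-L..L}|lborel. Q t) = (LINT t:{-L..<x}|lborel. Q t) + (LINT t:{x..L}|lborel. Q t)"
        by (rule split_Ico_Icc(1)[OF xl Qi])
      also have "(LINT t:{-L..<x}|lborel. Q t) = (LINT t:{-L..<x}|lborel. f' t * A' t)"
        by (rule set_lebesgue_integral_cong) (auto simp: Q_def k_def)
      also have "\<dots> = (LINT t:{-L..x}|lborel. f' t * A' t)" using xl by (simp add: Icc_Ico)
      also have "(LINT t:{x..L}|lborel. Q t) = (LINT t:{x..L}|lborel. f' t * B' t)"
        by (rule set_lebesgue_integral_cong) (auto simp: Q_def k_def)
      finally show ?thesis .
    qed
    have r1: "(LINT s:{-L..x}|lborel. \<gamma>^2 * A s * f s) = \<gamma>^2 * (LINT t:{-L..x}|lborel. f t * A t)"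
    proof -
      have "(LINT s:{-L..x}|lborel. \<gamma>^2 * A s * f s) = (LINT s:{-L..x}|lborel. \<gamma>^2 * (f s * A s))"
        by (rule set_lebesgue_integral_cong) (auto simp: algebra_simps)
      then show ?thesis by simp
    qed
    have r2: "(LINT s:{x..L}|lborel. \<gamma>^2 * Bf s * f s) = \<gamma>^2 * (LINT t:{x..L}|lborel. f t * Bf t)"
    proof -
      have "(LINT s:{x..L}|lborel. \<gamma>^2 * Bf s * f s) = (LINT s:{x..L}|lborel. \<gamma>^2 * (f s * Bf s))"
        by (rule set_lebesgue_integral_cong) (auto simp: algebra_simps)
      then show ?thesis by simp
    qed
    have "H1_inner L lam mu f f' Kx k = lam * ((LINT t:{-L..L}|lborel. P t) + (LINT t:{-L..L}|lborel. Q t))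
        + mu * (LINT t:{-L..L}|lborel. Q t)"
      unfolding H1_inner_def using set_integral_add(2)[OF Pi Qi] by (simp add: P_def Q_def)
    also have "\<dots> = (lam - (lam + mu) * \<gamma>^2) * ((LINT t:{-L..x}|lborel. f t * A t) + (LINT t:{x..L}|lborel. f t * Bf t))
        + (lam + mu) * f x * (A' x - B' x)"
      unfolding IP IQ I1eq I2eq r1 r2 A'L B'L by (simp add: algebra_simps)
    also have "\<dots> = f x"
    proof -
      have "(lam + mu) * (\<gamma>^2 / lam) = ((lam + mu) * \<gamma>^2) / lam" by simp
      also have "\<dots> = 1" using gg lam by simp
      finally have h: "(lam + mu) * (A' x - B' x) = 1" using jump by simp
      have "(lam + mu) * f x * (A' x - B' x) = f x * ((lam + mu) * (A' x - B' x))" by (simp add: ac_simps)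
      then show ?thesis using h gg by simp
    qed
    finally show ?thesis by simp
  qed
  show ?thesis using wdk repr by blast
qed

theorem mainTheorem9:
  fixes L lam mu :: real
  assumes "L > 0" and "lam > 0" and "mu \<ge> 0"
  defines "\<gamma> \<equiv> sqrt (lam / (lam + mu))"
  defines "Kf \<equiv> (\<lambda>x y. \<gamma> / (2 * lam * sinh (2 * \<gamma> * L)) *
      ((cosh (2 * \<gamma> * L) + cosh (2 * \<gamma> * x)) * cosh (\<gamma> * (x - y))
       + ((1 - 2 * (if x > y then 1 else 0)) * sinh (2 * \<gamma> * L) - sinh (2 * \<gamma> * x))
         * sinh (\<gamma> * (x - y))))"
  shows "is_reproducing_kernel_H1 L lam mu Kf \<and>
         (\<forall>K. is_reproducing_kernel_H1 L lam mu K \<longrightarrow>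
              (\<forall>x\<in>{-L..L}. \<forall>y\<in>{-L..L}. K x y = Kf x y))"
proof -
  have lm: "lam + mu > 0" using assms by simp
  have q: "lam / (lam + mu) > 0" using assms by simp
  have g0: "\<gamma> > 0" unfolding \<gamma>_def using q by simp
  have gg: "(lam + mu) * \<gamma>^2 = lam" unfolding \<gamma>_def using q lm by simp
  define c where "c = \<gamma> / (2 * lam * sinh (2 * \<gamma> * L))"
  have KB: "Kf x y = c * (cosh (\<gamma> * (x - y + 2 * L)) + cosh (\<gamma> * (x + y)))" if "x \<le> y" for x y
  proof -
    have h1: "cosh (\<gamma> * (x - y + 2 * L)) = cosh (\<gamma> * (x - y)) * cosh (2 * \<gamma> * L) + sinh (\<gamma> * (x - y)) * sinh (2 * \<gamma> * L)"
    proof -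
      have "\<gamma> * (x - y + 2 * L) = \<gamma> * (x - y) + 2 * \<gamma> * L" by algebra
      then show ?thesis by (simp only: cosh_add)
    qed
    have h2: "cosh (\<gamma> * (x + y)) = cosh (2 * \<gamma> * x) * cosh (\<gamma> * (x - y)) - sinh (2 * \<gamma> * x) * sinh (\<gamma> * (x - y))"
    proof -
      have "\<gamma> * (x + y) = 2 * \<gamma> * x - \<gamma> * (x - y)" by algebra
      then show ?thesis by (simp only: cosh_diff)
    qed
    show ?thesis using that unfolding Kf_def c_def h1 h2 by (simp add: algebra_simps)
  qed
  have KA: "Kf x y = c * (cosh (\<gamma> * (x - y - 2 * L)) + cosh (\<gamma> * (x + y)))" if "y \<le> x" for x y
  proof (cases "y < x")
    case True
    have h1: "cosh (\<gamma> * (x - y - 2 * L)) = cosh (\<gamma> * (x - y)) * cosh (2 * \<gamma> * L) - sinh (\<gamma> * (x - y)) * sinh (2 * \<gamma> * L)"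
    proof -
      have "\<gamma> * (x - y - 2 * L) = \<gamma> * (x - y) - 2 * \<gamma> * L" by algebra
      then show ?thesis by (simp only: cosh_diff)
    qed
    have h2: "cosh (\<gamma> * (x + y)) = cosh (2 * \<gamma> * x) * cosh (\<gamma> * (x - y)) - sinh (2 * \<gamma> * x) * sinh (\<gamma> * (x - y))"
    proof -
      have "\<gamma> * (x + y) = 2 * \<gamma> * x - \<gamma> * (x - y)" by algebra
      then show ?thesis by (simp only: cosh_diff)
    qed
    show ?thesis using True unfolding Kf_def c_def h1 h2 by (simp add: algebra_simps)
  next
    case False
    then have "y = x" using that by simp
    moreover have "\<gamma> * (x - x - 2 * L) = - (2 * \<gamma> * L)" "\<gamma> * (x + x) = 2 * \<gamma> * x" by algebra+
    ultimately show ?thesis unfolding Kf_def c_def by (simp add: mult_ac)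
  qed
  have ex: "\<exists>k. weak_deriv_H1 L (Kf x) k \<and> (\<forall>f f'. weak_deriv_H1 L f f' \<longrightarrow> f x = H1_inner L lam mu f f' (Kf x) k)"
    if x: "x \<in> {-L..L}" for x
    using repro_exists[OF assms(1-3) g0 gg x, of "Kf x"] KA KB unfolding c_def by blast
  have part1: "is_reproducing_kernel_H1 L lam mu Kf"
    unfolding is_reproducing_kernel_H1_def using ex by blast
  have part2: "K x y = Kf x y" if RK: "is_reproducing_kernel_H1 L lam mu K" and x: "x \<in> {-L..L}" and y: "y \<in> {-L..L}" for K x y
  proof -
    obtain k1 where wd1: "weak_deriv_H1 L (K x) k1"
      and r1: "\<forall>f f'. weak_deriv_H1 L f f' \<longrightarrow> f x = H1_inner L lam mu f f' (K x) k1"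
      using RK x unfolding is_reproducing_kernel_H1_def by blast
    obtain k0 where wd0: "weak_deriv_H1 L (Kf x) k0"
      and r0: "\<forall>f f'. weak_deriv_H1 L f f' \<longrightarrow> f x = H1_inner L lam mu f f' (Kf x) k0"
      using ex[OF x] by blast
    define h where "h t = K x t - Kf x t" for t
    define g where "g t = k1 t - k0 t" for t
    have m1: "set_borel_measurable lborel {-L..L} k1" and s1: "set_integrable lborel {-L..L} (\<lambda>t. (k1 t)^2)"
      and F1: "\<And>s. s \<in> {-L..L} \<Longrightarrow> K x s = K x (-L) + (LINT t:{-L..s}|lborel. k1 t)"
      using wd1 unfolding weak_deriv_H1_def by blast+
    have m0: "set_borel_measurable lborel {-L..L} k0" and s0: "set_integrable lborel {-L..L} (\<lambda>t. (k0 t)^2)"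
      and F0: "\<And>s. s \<in> {-L..L} \<Longrightarrow> Kf x s = Kf x (-L) + (LINT t:{-L..s}|lborel. k0 t)"
      using wd0 unfolding weak_deriv_H1_def by blast+
    have i1: "set_integrable lborel {-L..L} k1" by (rule wd_int[OF wd1])
    have i0: "set_integrable lborel {-L..L} k0" by (rule wd_int[OF wd0])
    have gm: "set_borel_measurable lborel {-L..L} g" unfolding g_def by (rule set_bm_diff[OF m1 m0])
    have g2: "set_integrable lborel {-L..L} (\<lambda>t. (g t)^2)"
    proof (rule set_integrable_bound[where f="\<lambda>t. 2 * (k1 t)^2 + 2 * (k0 t)^2"])
      show "set_integrable lborel {-L..L} (\<lambda>t. 2 * (k1 t)^2 + 2 * (k0 t)^2)" using s1 s0 by simp
      show "set_borel_measurable lborel {-L..L} (\<lambda>t. (g t)^2)"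
        using set_bm_mult[OF gm gm] by (simp add: power2_eq_square)
      have "(a - b)^2 \<le> 2 * a^2 + 2 * b^2" for a b :: real
      proof -
        have "0 \<le> (a + b)^2" by simp
        then show ?thesis by (simp add: power2_diff power2_sum)
      qed
      then show "AE t in lborel. t \<in> {-L..L} \<longrightarrow> norm ((g t)^2) \<le> norm (2 * (k1 t)^2 + 2 * (k0 t)^2)"
        by (auto intro!: AE_I2 simp: g_def)
    qed
    have wdh: "weak_deriv_H1 L h g"
      unfolding weak_deriv_H1_def
    proof (intro conjI gm g2 ballI)
      fix s assume s: "s \<in> {-L..L}"
      have a1: "set_integrable lborel {-L..s} k1" by (rule set_integrable_subset[OF i1]) (use s in auto)
      have a0: "set_integrable lborel {-L..s} k0" by (rule set_integrable_subset[OF i0]) (use s in auto)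
      show "h s = h (-L) + (LINT t:{-L..s}|lborel. g t)"
        unfolding h_def g_def using F1[OF s] F0[OF s] set_integral_diff(2)[OF a1 a0] by simp
    qed
    have hc: "continuous_on {-L..L} h" by (rule wd_cont[OF wdh])
    have K1c: "continuous_on {-L..L} (K x)" by (rule wd_cont[OF wd1])
    have K0c: "continuous_on {-L..L} (Kf x)" by (rule wd_cont[OF wd0])
    have hK1: "set_integrable lborel {-L..L} (\<lambda>t. h t * K x t)"
      by (rule borel_integrable_atLeastAtMost'[OF continuous_on_mult[OF hc K1c]])
    have hK0: "set_integrable lborel {-L..L} (\<lambda>t. h t * Kf x t)"
      by (rule borel_integrable_atLeastAtMost'[OF continuous_on_mult[OF hc K0c]])
    have gk1: "set_integrable lborel {-L..L} (\<lambda>t. g t * k1 t)" by (rule L2prod[OF gm m1 g2 s1])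
    have gk0: "set_integrable lborel {-L..L} (\<lambda>t. g t * k0 t)" by (rule L2prod[OF gm m0 g2 s0])
    have e1: "h x = H1_inner L lam mu h g (K x) k1" using r1 wdh by blast
    have e0: "h x = H1_inner L lam mu h g (Kf x) k0" using r0 wdh by blast
    define Ih where "Ih = (LINT t:{-L..L}|lborel. h t * h t)"
    define Ig where "Ig = (LINT t:{-L..L}|lborel. g t * g t)"
    have dh: "(LINT t:{-L..L}|lborel. h t * K x t) - (LINT t:{-L..L}|lborel. h t * Kf x t) = Ih"
    proof -
      have "(LINT t:{-L..L}|lborel. h t * K x t) - (LINT t:{-L..L}|lborel. h t * Kf x t)
          = (LINT t:{-L..L}|lborel. h t * K x t - h t * Kf x t)"
        using set_integral_diff(2)[OF hK1 hK0] by simp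
      also have "\<dots> = Ih" unfolding Ih_def
        by (rule set_lebesgue_integral_cong) (auto simp: h_def algebra_simps)
      finally show ?thesis .
    qed
    have dg: "(LINT t:{-L..L}|lborel. g t * k1 t) - (LINT t:{-L..L}|lborel. g t * k0 t) = Ig"
    proof -
      have "(LINT t:{-L..L}|lborel. g t * k1 t) - (LINT t:{-L..L}|lborel. g t * k0 t)
          = (LINT t:{-L..L}|lborel. g t * k1 t - g t * k0 t)"
        using set_integral_diff(2)[OF gk1 gk0] by simp
      also have "\<dots> = Ig" unfolding Ig_def
        by (rule set_lebesgue_integral_cong) (auto simp: g_def algebra_simps)
      finally show ?thesis .
    qed
    have "0 = H1_inner L lam mu h g (K x) k1 - H1_inner L lam mu h g (Kf x) k0" using e1 e0 by simp
    also have "\<dots> = lam * (((LINT t:{-L..L}|lborel. h t * K x t) - (LINT t:{-L..L}|lborel. h t * Kf x t))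
        + ((LINT t:{-L..L}|lborel. g t * k1 t) - (LINT t:{-L..L}|lborel. g t * k0 t)))
        + mu * ((LINT t:{-L..L}|lborel. g t * k1 t) - (LINT t:{-L..L}|lborel. g t * k0 t))"
      unfolding H1_inner_def using set_integral_add(2)[OF hK1 gk1] set_integral_add(2)[OF hK0 gk0]
      by (simp add: algebra_simps)
    also have "\<dots> = lam * Ih + (lam + mu) * Ig" unfolding dh dg by (simp add: algebra_simps)
    finally have z: "lam * Ih + (lam + mu) * Ig = 0" by simp
    have Ihn: "0 \<le> Ih" unfolding Ih_def set_lebesgue_integral_def
      by (intro integral_nonneg_AE AE_I2) (simp add: indicator_def)
    have Ign: "0 \<le> Ig" unfolding Ig_def set_lebesgue_integral_def
      by (intro integral_nonneg_AE AE_I2) (simp add: indicator_def)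
    have "0 \<le> lam * Ih" using Ihn assms by simp
    moreover have "0 \<le> (lam + mu) * Ig" using Ign lm by simp
    ultimately have "lam * Ih = 0" using z by linarith
    then have Ih0: "Ih = 0" using assms by simp
    have hh: "set_integrable lborel {-L..L} (\<lambda>t. h t * h t)"
      by (rule borel_integrable_atLeastAtMost'[OF continuous_on_mult[OF hc hc]])
    have "((\<lambda>t. h t * h t) has_integral 0) (cbox (-L) L)"
      using set_borel_integral_eq_integral[OF hh] Ih0 integrable_integral[OF set_borel_integral_eq_integral(1)[OF hh]]
      unfolding Ih_def by (simp add: cbox_interval)
    then have "h y * h y = 0"
      by (rule has_integral_0_cbox_imp_0[of "-L" L "\<lambda>t. h t * h t" y, rotated 2])
        (use continuous_on_mult[OF hc hc] y assms(1) in \<open>auto simp: cbox_interval box_real\<close>)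
    then show ?thesis by (simp add: h_def)
  qed
  show ?thesis using part1 part2 by blast
qed

end
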